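(* Let $F$ be a rooted forest and let $B$ be a complete graph on at least $v(F)+e(F)$ vertices, all edges initially free. Then for any injective assignment of the roots of $F$ to vertices of $B$ fixed at the beginning, Waiter, playing the Waiter-Client game on $B$, can force a red copy $\bar F$ of $F$ within at most $e(F)$ rounds in such a way that (a) every root is mapped to its assigned vertex; (b) every colored edge has an endpoint in a non-leaf of $\bar F$; (c) all blue edges between $V(\bar F)$ and $V(B)\setminus V(\bar F)$ form a star forest such that every star is centered at a vertex $u\in V(\bar F)$ and has at most $\deg_{\bar F}(u)$ edges.
   Context: Waiter-Client game on $B$: in each round Waiter offers two free edges of $B$, Client colors one red and the other becomes blue. A rooted forest is a forest each of whose components contains exactly one designated vertex called a root. A leaf is a vertex of degree 1 that is not a root; leaves of $\bar F$ are the images of leaves of $F$. $v(F)$, $e(F)$ denote numbers of vertices and edges. *)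

theory Defs
  imports Main
begin

definition simple_graph :: "'a set \<Rightarrow> 'a set set \<Rightarrow> bool" where
  "simple_graph V E \<longleftrightarrow> finite V \<and> (\<forall>e\<in>E. e \<subseteq> V \<and> card e = 2)"

definition adj :: "'a set set \<Rightarrow> 'a \<Rightarrow> 'a \<Rightarrow> bool" where
  "adj E u v \<longleftrightarrow> {u, v} \<in> E"

definition degree :: "'a set set \<Rightarrow> 'a \<Rightarrow> nat" where
  "degree E v = card {e \<in> E. v \<in> e}"

definition is_cycle :: "'a set set \<Rightarrow> 'a list \<Rightarrow> bool" where
  "is_cycle E xs \<longleftrightarrow> length xs \<ge> 3 \<and> distinct xs \<and>
     (\<forall>i. Suc i < length xs \<longrightarrow> adj E (xs ! i) (xs ! Suc i)) \<and>
     adj E (last xs) (hd xs)"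

definition forest :: "'a set \<Rightarrow> 'a set set \<Rightarrow> bool" where
  "forest V E \<longleftrightarrow> simple_graph V E \<and> \<not> (\<exists>xs. is_cycle E xs)"

definition connected_in :: "'a set set \<Rightarrow> 'a \<Rightarrow> 'a \<Rightarrow> bool" where
  "connected_in E u v \<longleftrightarrow> (u, v) \<in> {(x, y). adj E x y}\<^sup>*"

definition rooted_forest :: "'a set \<Rightarrow> 'a set set \<Rightarrow> 'a set \<Rightarrow> bool" where
  "rooted_forest V E Rt \<longleftrightarrow> forest V E \<and> Rt \<subseteq> V \<and>
     (\<forall>v\<in>V. \<exists>!r. r \<in> Rt \<and> connected_in E v r)"

definition leaves :: "'a set \<Rightarrow> 'a set set \<Rightarrow> 'a set \<Rightarrow> 'a set" where
  "leaves V E Rt = {v \<in> V. degree E v = 1 \<and> v \<notin> Rt}"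

definition complete_edges :: "'b set \<Rightarrow> 'b set set" where
  "complete_edges V = {e. e \<subseteq> V \<and> card e = 2}"

text \<open>In each round Waiter offers two distinct free edges, Client colours one of them red
  and the other becomes blue.\<close>
fun wc_forces :: "('b set set \<Rightarrow> 'b set set \<Rightarrow> bool) \<Rightarrow> 'b set set \<Rightarrow> nat
                   \<Rightarrow> 'b set set \<Rightarrow> 'b set set \<Rightarrow> bool" where
  "wc_forces P Bd 0 R Bl = P R Bl"
| "wc_forces P Bd (Suc n) R Bl =
     (P R Bl \<or>
      (\<exists>e1 e2. e1 \<in> Bd - (R \<union> Bl) \<and> e2 \<in> Bd - (R \<union> Bl) \<and> e1 \<noteq> e2 \<and>
         wc_forces P Bd n (insert e1 R) (insert e2 Bl) \<and>
         wc_forces P Bd n (insert e2 R) (insert e1 Bl)))"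

text \<open>S is a star forest all of whose stars are centred at vertices of C, and the star
  centred at u has at most d u edges: every edge is assigned a centre (one of its endpoints,
  lying in C); stars with different centres are vertex-disjoint.\<close>
definition centered_star_forest :: "'b set set \<Rightarrow> 'b set \<Rightarrow> ('b \<Rightarrow> nat) \<Rightarrow> bool" where
  "centered_star_forest S C d \<longleftrightarrow>
     (\<exists>c. (\<forall>e\<in>S. c e \<in> e \<and> c e \<in> C) \<and>
          (\<forall>e\<in>S. \<forall>e'\<in>S. c e \<noteq> c e' \<longrightarrow> e \<inter> e' = {}) \<and>
          (\<forall>u\<in>C. card {e\<in>S. c e = u} \<le> d u))"

definition good_copy :: "'a set \<Rightarrow> 'a set set \<Rightarrow> 'a set \<Rightarrow> ('a \<Rightarrow> 'b) \<Rightarrow> 'b set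
                          \<Rightarrow> 'b set set \<Rightarrow> 'b set set \<Rightarrow> ('a \<Rightarrow> 'b) \<Rightarrow> bool" where
  "good_copy VF EF Rt \<rho> VB R Bl \<phi> \<longleftrightarrow>
     (let Vc = \<phi> ` VF; Ec = (\<lambda>e. \<phi> ` e) ` EF; nonleaf = Vc - \<phi> ` leaves VF EF Rt;
          S = {e \<in> Bl. e \<inter> Vc \<noteq> {} \<and> e \<inter> (VB - Vc) \<noteq> {}} in
       inj_on \<phi> VF \<and> \<phi> ` VF \<subseteq> VB \<and> Ec \<subseteq> R \<and>
       (\<forall>r\<in>Rt. \<phi> r = \<rho> r) \<and>
       (\<forall>e\<in>R \<union> Bl. e \<inter> nonleaf \<noteq> {}) \<and>
       centered_star_forest S Vc (degree Ec))"

end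

theory Submission
  imports Defs
begin

definition walk :: "'a set set \<Rightarrow> 'a list \<Rightarrow> bool" where
  "walk E xs \<longleftrightarrow> xs \<noteq> [] \<and> (\<forall>i. Suc i < length xs \<longrightarrow> adj E (xs ! i) (xs ! Suc i))"

definition ind :: "'a set set \<Rightarrow> 'a set \<Rightarrow> 'a set set" where
  "ind E W = {e \<in> E. e \<subseteq> W}"

lemma walk_exists:
  assumes "(a, b) \<in> {(x, y). adj E x y}\<^sup>*"
  shows "\<exists>xs. walk E xs \<and> distinct xs \<and> hd xs = a \<and> last xs = b"
  using assms
proof (induction rule: rtrancl_induct)
  case base
  show ?case by (rule exI[of _ "[a]"]) (simp add: walk_def)
next
  case (step y z)
  then obtain xs where xs: "walk E xs" "distinct xs" "hd xs = a" "last xs = y" by blast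
  have yz: "adj E y z" using step.hyps(2) by simp
  show ?case
  proof (cases "z \<in> set xs")
    case True
    then obtain i where i: "i < length xs" "xs ! i = z" by (auto simp: in_set_conv_nth)
    define ys where "ys = take (Suc i) xs"
    have len: "length ys = Suc i" using i by (simp add: ys_def)
    have "walk E ys"
      using xs(1) i unfolding walk_def ys_def by auto
    moreover have "distinct ys" using xs(2) by (simp add: ys_def)
    moreover have "hd ys = a" using xs(3) by (simp add: ys_def)
    moreover have "last ys = z"
    proof -
      have "ys \<noteq> []" using len by auto
      then have "last ys = ys ! i" using len by (simp add: last_conv_nth)
      then show ?thesis using i by (simp add: ys_def)
    qed
    ultimately show ?thesis by blast
  next
    case False
    define ys where "ys = xs @ [z]"
    have xne: "xs \<noteq> []" using xs(1) by (simp add: walk_def)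
    have "walk E ys"
      unfolding walk_def ys_def
    proof (intro conjI allI impI)
      fix j assume j: "Suc j < length (xs @ [z])"
      show "adj E ((xs @ [z]) ! j) ((xs @ [z]) ! Suc j)"
      proof (cases "Suc j < length xs")
        case True
        then show ?thesis using xs(1) by (simp add: walk_def nth_append)
      next
        case False
        then have "j = length xs - 1" using j by simp
        moreover have "xs ! (length xs - 1) = y" using xs(4) xne by (simp add: last_conv_nth)
        ultimately show ?thesis using yz xne False j by (simp add: nth_append)
      qed
    qed simp
    moreover have "distinct ys" using xs(2) False by (simp add: ys_def)
    moreover have "hd ys = a" using xs(3) xne by (simp add: ys_def)
    moreover have "last ys = z" by (simp add: ys_def)
    ultimately show ?thesis by blast
  qed
qed

lemma walk_in_W:
  assumes "walk (ind E W) xs" "length xs \<ge> 2"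
  shows "set xs \<subseteq> W"
proof
  fix v assume "v \<in> set xs"
  then obtain j where j: "j < length xs" "xs ! j = v" by (auto simp: in_set_conv_nth)
  show "v \<in> W"
  proof (cases "Suc j < length xs")
    case True
    then have "{xs ! j, xs ! Suc j} \<in> ind E W" using assms(1) by (simp add: walk_def adj_def)
    then show ?thesis using j by (auto simp: ind_def)
  next
    case False
    then obtain k where k: "j = Suc k" using assms(2) j by (cases j) auto
    have "Suc k < length xs" using j k by simp
    then have "adj (ind E W) (xs ! k) (xs ! Suc k)" using assms(1) unfolding walk_def by blast
    then have "{xs ! k, xs ! Suc k} \<in> ind E W" by (simp add: adj_def)
    then show ?thesis using j k by (auto simp: ind_def)
  qed
qed

lemma connected_sym:
  assumes "connected_in E a b" shows "connected_in E b a"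
proof -
  have "(a, b) \<in> {(x, y). adj E x y}\<^sup>*" using assms by (simp add: connected_in_def)
  then have "(b, a) \<in> {(x, y). adj E x y}\<^sup>*"
  proof (induction rule: rtrancl_induct)
    case base then show ?case by simp
  next
    case (step y z)
    have "(z, y) \<in> {(x, y). adj E x y}" using step.hyps(2) by (simp add: adj_def insert_commute)
    then show ?case using step.IH by (rule converse_rtrancl_into_rtrancl)
  qed
  then show ?thesis by (simp add: connected_in_def)
qed

lemma connected_trans:
  "connected_in E a b \<Longrightarrow> connected_in E b c \<Longrightarrow> connected_in E a c"
  unfolding connected_in_def by (rule rtrancl_trans)

lemma connected_mono:
  assumes "E \<subseteq> E'" "connected_in E a b" shows "connected_in E' a b"
proof -
  have "{(x, y). adj E x y} \<subseteq> {(x, y). adj E' x y}" using assms(1) by (auto simp: adj_def)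
  then show ?thesis using assms(2) unfolding connected_in_def by (rule rtrancl_mono[THEN subsetD])
qed

lemma connected_edge: "{a, b} \<in> E \<Longrightarrow> connected_in E a b"
  unfolding connected_in_def adj_def by (rule r_into_rtrancl) simp

lemma connected_refl: "connected_in E a a"
  unfolding connected_in_def by simp

lemma cycle_contra:
  assumes "forest VF EF" "w \<notin> W" "u \<in> W" "u' \<in> W" "u \<noteq> u'"
    "{u, w} \<in> EF" "{u', w} \<in> EF" "connected_in (ind EF W) u u'"
  shows False
proof -
  obtain xs where xs: "walk (ind EF W) xs" "distinct xs" "hd xs = u" "last xs = u'"
  proof -
    have "(u, u') \<in> {(x, y). adj (ind EF W) x y}\<^sup>*" using assms(8) by (simp add: connected_in_def)
    from walk_exists[OF this] show ?thesis using that by blast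
  qed
  have xne: "xs \<noteq> []" using xs(1) by (simp add: walk_def)
  have len: "length xs \<ge> 2"
  proof (rule ccontr)
    assume "\<not> 2 \<le> length xs"
    moreover have "0 < length xs" using xne by simp
    ultimately have "length xs = 1" by linarith
    then obtain a where "xs = [a]" by (cases xs) auto
    then show False using xs assms(5) by simp
  qed
  have sW: "set xs \<subseteq> W" using walk_in_W xs(1) len by blast
  have "is_cycle EF (w # xs)"
    unfolding is_cycle_def
  proof (intro conjI allI impI)
    show "3 \<le> length (w # xs)" using len by simp
    have "w \<notin> set xs" using sW assms(2) by blast
    then show "distinct (w # xs)" using xs(2) by simp
    have "last (w # xs) = u'" using xne xs(4) by simp
    then show "adj EF (last (w # xs)) (hd (w # xs))" using assms(7) by (simp add: adj_def)
    fix i assume i: "Suc i < length (w # xs)"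
    show "adj EF ((w # xs) ! i) ((w # xs) ! Suc i)"
    proof (cases i)
      case 0
      have x0: "xs ! 0 = u" using xne xs(3) by (simp add: hd_conv_nth)
      have "{w, u} = {u, w}" by blast
      then have "adj EF w u" using assms(6) by (simp add: adj_def)
      then show ?thesis using 0 x0 by simp
    next
      case (Suc j)
      then have "adj (ind EF W) (xs ! j) (xs ! Suc j)" using xs(1) i by (simp add: walk_def)
      then show ?thesis using Suc by (simp add: adj_def ind_def)
    qed
  qed
  then show False using assms(1) by (auto simp: forest_def)
qed

lemma ex1_eq: "\<exists>!x. P x \<Longrightarrow> P a \<Longrightarrow> P b \<Longrightarrow> a = b"
  by blast

lemma rf_facts:
  assumes "rooted_forest VF EF Rt"
  shows "finite VF" "finite EF" "\<And>e. e \<in> EF \<Longrightarrow> e \<subseteq> VF \<and> card e = 2" "Rt \<subseteq> VF"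
    "forest VF EF" "\<And>v. v \<in> VF \<Longrightarrow> \<exists>!r. r \<in> Rt \<and> connected_in EF v r"
proof -
  show fin: "finite VF" using assms by (simp add: rooted_forest_def forest_def simple_graph_def)
  show e: "\<And>e. e \<in> EF \<Longrightarrow> e \<subseteq> VF \<and> card e = 2"
    using assms by (auto simp: rooted_forest_def forest_def simple_graph_def)
  have "EF \<subseteq> Pow VF" using e by auto
  then show "finite EF" using fin by (meson finite_Pow_iff finite_subset)
  show "Rt \<subseteq> VF" "forest VF EF" "\<And>v. v \<in> VF \<Longrightarrow> \<exists>!r. r \<in> Rt \<and> connected_in EF v r"
    using assms by (auto simp: rooted_forest_def)
qed

lemma new_edges:
  assumes rf: "rooted_forest VF EF Rt" and WV: "W \<subseteq> VF"
    and conn: "\<forall>v\<in>W. \<exists>r\<in>Rt. connected_in (ind EF W) v r"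
    and uw: "{u, w} \<in> EF" "u \<in> W" "w \<notin> W"
  shows "ind EF (insert w W) = insert {u, w} (ind EF W)"
proof
  show "insert {u, w} (ind EF W) \<subseteq> ind EF (insert w W)" using uw by (auto simp: ind_def)
  show "ind EF (insert w W) \<subseteq> insert {u, w} (ind EF W)"
  proof
    fix e assume e: "e \<in> ind EF (insert w W)"
    show "e \<in> insert {u, w} (ind EF W)"
    proof (cases "e \<subseteq> W")
      case True then show ?thesis using e by (auto simp: ind_def)
    next
      case False
      have eEF: "e \<in> EF" "e \<subseteq> insert w W" using e by (auto simp: ind_def)
      have "card e = 2" using rf_facts(3)[OF rf eEF(1)] by simp
      then obtain a b where ab: "e = {a, b}" "a \<noteq> b" by (auto simp: card_2_iff)
      have "w \<in> e" using False eEF by auto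
      then obtain u' where u': "e = {u', w}" "u' \<noteq> w" using ab by auto
      have u'W: "u' \<in> W" using u' eEF by auto
      show ?thesis
      proof (cases "u' = u")
        case True then show ?thesis using u' by simp
      next
        case False
        obtain r1 where r1: "r1 \<in> Rt" "connected_in (ind EF W) u' r1" using conn u'W by blast
        obtain r2 where r2: "r2 \<in> Rt" "connected_in (ind EF W) u r2" using conn uw(2) by blast
        have sub: "ind EF W \<subseteq> EF" by (auto simp: ind_def)
        have c1: "connected_in EF r2 u" using connected_sym[OF connected_mono[OF sub r2(2)]] .
        have c2: "connected_in EF u w" using connected_edge[OF uw(1)] .
        have c3: "connected_in EF w u'" using connected_sym[OF connected_edge[of u' w EF]] u' eEF(1) by simp
        have c4: "connected_in EF u' r1" using connected_mono[OF sub r1(2)] .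
        have c: "connected_in EF r2 r1"
          using connected_trans[OF connected_trans[OF connected_trans[OF c1 c2] c3] c4] .
        have "r2 \<in> VF" using rf_facts(4)[OF rf] r2 by auto
        then have "\<exists>!r. r \<in> Rt \<and> connected_in EF r2 r" using rf_facts(6)[OF rf] by blast
        then have "r1 = r2" using ex1_eq[of "\<lambda>r. r \<in> Rt \<and> connected_in EF r2 r" r1 r2] r1(1) r2(1) c connected_refl[of EF r2] by blast
        then have "connected_in (ind EF W) r2 u'" using connected_sym[OF r1(2)] by simp
        then have "connected_in (ind EF W) u u'" using connected_trans[OF r2(2)] by blast
        moreover have "{u', w} \<in> EF" using u'(1) eEF(1) by simp
        moreover have ne: "u \<noteq> u'" using False by simp
        ultimately have False using cycle_contra[OF rf_facts(5)[OF rf] uw(3) uw(2) u'W ne uw(1)] by blast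
        then show ?thesis ..
      qed
    qed
  qed
qed

lemma nonleaf:
  assumes rf: "rooted_forest VF EF Rt"
    and conn: "\<forall>v\<in>W. \<exists>r\<in>Rt. connected_in (ind EF W) v r"
    and uw: "{u, w} \<in> EF" "u \<in> W" "w \<notin> W"
  shows "u \<notin> leaves VF EF Rt"
proof
  assume "u \<in> leaves VF EF Rt"
  then have deg: "degree EF u = 1" "u \<notin> Rt" by (auto simp: leaves_def)
  obtain r where r: "r \<in> Rt" "connected_in (ind EF W) u r" using conn uw by blast
  have "r \<noteq> u" using deg r by auto
  have rr: "(u, r) \<in> {(x, y). adj (ind EF W) x y}\<^sup>*" using r(2) by (simp add: connected_in_def)
  have "\<exists>z. adj (ind EF W) u z"
    by (rule converse_rtranclE[OF rr]) (use \<open>r \<noteq> u\<close> in auto)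
  then obtain z where "adj (ind EF W) u z" by blast
  then have z: "{u, z} \<in> EF" "{u, z} \<subseteq> W" by (auto simp: adj_def ind_def)
  have ne: "{u, z} \<noteq> {u, w}" using z uw(3) by auto
  have fin: "finite EF" using rf_facts(2)[OF rf] .
  have "{{u, z}, {u, w}} \<subseteq> {e \<in> EF. u \<in> e}" using z uw(1) by auto
  then have "card {{u, z}, {u, w}} \<le> degree EF u" unfolding degree_def
    by (rule card_mono[rotated]) (use fin in auto)
  then show False using ne deg by simp
qed

lemma cross_aux:
  "(a, b) \<in> {(x, y). adj E x y}\<^sup>* \<Longrightarrow> a \<notin> W \<Longrightarrow> b \<in> W \<Longrightarrow> \<exists>u w. {u, w} \<in> E \<and> u \<in> W \<and> w \<notin> W"
proof (induction rule: rtrancl_induct)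
  case base then show ?case by simp
next
  case (step y z)
  show ?case
  proof (cases "y \<in> W")
    case True then show ?thesis using step.IH step.prems(1) by blast
  next
    case False
    have "{z, y} \<in> E" using step.hyps(2) by (simp add: adj_def insert_commute)
    then show ?thesis using False step.prems(2) by blast
  qed
qed

lemma cross_edge:
  assumes rf: "rooted_forest VF EF Rt" and "Rt \<subseteq> W" "W \<subseteq> VF" "W \<noteq> VF"
  shows "\<exists>u w. {u, w} \<in> EF \<and> u \<in> W \<and> w \<notin> W"
proof -
  obtain v where v: "v \<in> VF" "v \<notin> W" using assms by blast
  obtain r where r: "r \<in> Rt" "connected_in EF v r" using rf_facts(6)[OF rf v(1)] by blast
  have "r \<in> W" using assms r by auto
  then show ?thesis using cross_aux[of v r EF W] r v unfolding connected_in_def by blast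
qed

definition Inv :: "'a set \<Rightarrow> 'a set set \<Rightarrow> 'a set \<Rightarrow> ('a \<Rightarrow> 'b) \<Rightarrow> 'b set \<Rightarrow> 'a set \<Rightarrow> ('a \<Rightarrow> 'b)
   \<Rightarrow> 'b set set \<Rightarrow> 'b set set \<Rightarrow> ('b set \<Rightarrow> 'a) \<Rightarrow> ('b set \<Rightarrow> 'b) \<Rightarrow> bool" where
  "Inv VF EF Rt \<rho> VB W \<phi> R Bl c yy \<longleftrightarrow>
    Rt \<subseteq> W \<and> W \<subseteq> VF \<and> inj_on \<phi> W \<and> \<phi> ` W \<subseteq> VB \<and> (\<forall>r\<in>Rt. \<phi> r = \<rho> r) \<and>
    (\<forall>v\<in>W. \<exists>r\<in>Rt. connected_in (ind EF W) v r) \<and>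
    R = (\<lambda>e. \<phi> ` e) ` ind EF W \<and>
    (\<forall>e\<in>ind EF W. \<exists>a\<in>e. a \<notin> leaves VF EF Rt) \<and>
    (\<forall>e\<in>Bl. {\<phi> (c e), yy e} = e \<and> c e \<in> W \<and> c e \<notin> leaves VF EF Rt \<and> yy e \<in> VB) \<and>
    inj_on yy Bl \<and> finite Bl \<and> card Bl = card (ind EF W) \<and>
    (\<forall>v\<in>W. card {e\<in>Bl. c e = v} \<le> card {e\<in>ind EF W. v \<in> e})"

lemma inv_step:
  assumes rf: "rooted_forest VF EF Rt" and inv: "Inv VF EF Rt \<rho> VB W \<phi> R Bl c yy"
    and uw: "{u, w} \<in> EF" "u \<in> W" "w \<notin> W"
    and xy: "x \<in> VB" "y \<in> VB" "x \<notin> \<phi> ` W \<union> yy ` Bl" "y \<notin> \<phi> ` W \<union> yy ` Bl" "x \<noteq> y"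
  shows "Inv VF EF Rt \<rho> VB (insert w W) (\<phi>(w := x)) (insert {\<phi> u, x} R) (insert {\<phi> u, y} Bl)
           (c({\<phi> u, y} := u)) (yy({\<phi> u, y} := y))"
proof -
  define W' where "W' = insert w W"
  define \<phi>' where "\<phi>' = \<phi>(w := x)"
  define e2 where "e2 = {\<phi> u, y}"
  define Bl' where "Bl' = insert e2 Bl"
  define c' where "c' = c(e2 := u)"
  define yy' where "yy' = yy(e2 := y)"
  note I = inv[unfolded Inv_def]
  have RtW: "Rt \<subseteq> W" and WV: "W \<subseteq> VF" and injW: "inj_on \<phi> W" and imgW: "\<phi> ` W \<subseteq> VB"
    and roots: "\<forall>r\<in>Rt. \<phi> r = \<rho> r"
    and conn: "\<forall>v\<in>W. \<exists>r\<in>Rt. connected_in (ind EF W) v r"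
    and Rdef: "R = (\<lambda>e. \<phi> ` e) ` ind EF W"
    and rednl: "\<forall>e\<in>ind EF W. \<exists>a\<in>e. a \<notin> leaves VF EF Rt"
    and blue: "\<forall>e\<in>Bl. {\<phi> (c e), yy e} = e \<and> c e \<in> W \<and> c e \<notin> leaves VF EF Rt \<and> yy e \<in> VB"
    and injyy: "inj_on yy Bl" and finBl: "finite Bl" and cardBl: "card Bl = card (ind EF W)"
    and cnt: "\<forall>v\<in>W. card {e\<in>Bl. c e = v} \<le> card {e\<in>ind EF W. v \<in> e}"
    using I by auto
  have ind': "ind EF W' = insert {u, w} (ind EF W)"
    unfolding W'_def using new_edges[OF rf WV conn uw] .
  have wV: "w \<in> VF" and uwne: "u \<noteq> w"
    using rf_facts(3)[OF rf uw(1)] by (auto simp: card_2_iff doubleton_eq_iff)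
  have nl: "u \<notin> leaves VF EF Rt" using nonleaf[OF rf conn uw] .
  have e2notin: "e2 \<notin> Bl"
  proof
    assume "e2 \<in> Bl"
    then have "e2 = {\<phi> (c e2), yy e2}" "c e2 \<in> W" using blue by auto
    then have "y = \<phi> (c e2) \<or> y = yy e2" unfolding e2_def by blast
    then show False using xy(4) \<open>e2 \<in> Bl\<close> \<open>c e2 \<in> W\<close> by auto
  qed
  have uwnotin: "{u, w} \<notin> ind EF W" using uw(3) by (auto simp: ind_def)
  have finind: "finite (ind EF W)"
    using rf_facts(2)[OF rf] by (auto simp: ind_def)
  have phi'W: "\<And>v. v \<in> W \<Longrightarrow> \<phi>' v = \<phi> v" using uw(3) by (auto simp: \<phi>'_def)
  have imgeq: "\<phi>' ` W = \<phi> ` W" using phi'W by auto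
  have "inj_on \<phi>' W" using injW inj_on_cong[of W \<phi>' \<phi>] phi'W by simp
  then have inj': "inj_on \<phi>' W'" unfolding W'_def using xy(3) imgeq uw(3)
    by (auto simp: \<phi>'_def)
  have img': "\<phi>' ` W' \<subseteq> VB" using imgeq imgW xy(1) by (auto simp: W'_def \<phi>'_def)
  have roots': "\<forall>r\<in>Rt. \<phi>' r = \<rho> r" using roots RtW phi'W by auto
  have subind: "ind EF W \<subseteq> ind EF W'" using ind' by auto
  have conn': "\<forall>v\<in>W'. \<exists>r\<in>Rt. connected_in (ind EF W') v r"
  proof
    fix v assume "v \<in> W'"
    show "\<exists>r\<in>Rt. connected_in (ind EF W') v r"
    proof (cases "v = w")
      case True
      obtain r where r: "r \<in> Rt" "connected_in (ind EF W) u r" using conn uw(2) by blast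
      have "{w, u} \<in> ind EF W'" using ind' by (auto simp: insert_commute)
      then have "connected_in (ind EF W') w u" by (rule connected_edge)
      then show ?thesis using r connected_mono[OF subind] connected_trans True by metis
    next
      case False
      then have "v \<in> W" using \<open>v \<in> W'\<close> by (auto simp: W'_def)
      then show ?thesis using conn connected_mono[OF subind] by blast
    qed
  qed
  have R': "insert {\<phi> u, x} R = (\<lambda>e. \<phi>' ` e) ` ind EF W'"
  proof -
    have "(\<lambda>e. \<phi>' ` e) ` ind EF W = (\<lambda>e. \<phi> ` e) ` ind EF W"
    proof (rule image_cong[OF refl])
      fix e assume "e \<in> ind EF W"
      then have "e \<subseteq> W" by (auto simp: ind_def)
      then show "\<phi>' ` e = \<phi> ` e" using phi'W by (auto intro!: image_cong)
    qed
    moreover have "\<phi>' ` {u, w} = {\<phi> u, x}" using uwne by (auto simp: \<phi>'_def)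
    ultimately show ?thesis using ind' Rdef by simp
  qed
  have rednl': "\<forall>e\<in>ind EF W'. \<exists>a\<in>e. a \<notin> leaves VF EF Rt" using ind' rednl nl by auto
  have blue': "\<forall>e\<in>Bl'. {\<phi>' (c' e), yy' e} = e \<and> c' e \<in> W' \<and> c' e \<notin> leaves VF EF Rt \<and> yy' e \<in> VB"
  proof
    fix e assume "e \<in> Bl'"
    show "{\<phi>' (c' e), yy' e} = e \<and> c' e \<in> W' \<and> c' e \<notin> leaves VF EF Rt \<and> yy' e \<in> VB"
    proof (cases "e = e2")
      case True
      then show ?thesis using nl xy(2) uw(2) phi'W
        by (auto simp: c'_def yy'_def e2_def W'_def)
    next
      case False
      then have "e \<in> Bl" using \<open>e \<in> Bl'\<close> by (auto simp: Bl'_def)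
      then show ?thesis using False blue phi'W by (auto simp: c'_def yy'_def W'_def)
    qed
  qed
  have "inj_on yy' Bl" using injyy e2notin unfolding inj_on_def yy'_def by auto
  then have injyy': "inj_on yy' Bl'" using xy(4) e2notin
    by (auto simp: Bl'_def yy'_def)
  have finBl': "finite Bl'" using finBl by (simp add: Bl'_def)
  have cardBl': "card Bl' = card (ind EF W')"
    using cardBl e2notin finBl finind uwnotin ind' by (simp add: Bl'_def)
  have cnt': "\<forall>v\<in>W'. card {e\<in>Bl'. c' e = v} \<le> card {e\<in>ind EF W'. v \<in> e}"
  proof
    fix v assume vW': "v \<in> W'"
    show "card {e\<in>Bl'. c' e = v} \<le> card {e\<in>ind EF W'. v \<in> e}"
    proof (cases "v = u")
      case True
      have A: "{e\<in>Bl'. c' e = v} = insert e2 {e\<in>Bl. c e = v}"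
        using True e2notin by (auto simp: Bl'_def c'_def)
      have B: "{e\<in>ind EF W'. v \<in> e} = insert {u, w} {e\<in>ind EF W. v \<in> e}"
        using True ind' by auto
      have "card {e\<in>Bl. c e = v} \<le> card {e\<in>ind EF W. v \<in> e}" using cnt True uw(2) by blast
      then show ?thesis unfolding A B using e2notin uwnotin finBl finind by simp
    next
      case False
      have A: "{e\<in>Bl'. c' e = v} = {e\<in>Bl. c e = v}"
        using False e2notin by (auto simp: Bl'_def c'_def)
      have fin2: "finite {e\<in>ind EF W'. v \<in> e}" using finind ind' by simp
      show ?thesis
      proof (cases "v \<in> W")
        case True
        have "card {e\<in>Bl. c e = v} \<le> card {e\<in>ind EF W. v \<in> e}" using cnt True by blast
        also have "\<dots> \<le> card {e\<in>ind EF W'. v \<in> e}"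
          using fin2 subind by (intro card_mono) auto
        finally show ?thesis unfolding A .
      next
        case False
        then have E0: "{e\<in>Bl. c e = v} = {}" using blue by auto
        show ?thesis unfolding A E0 by simp
      qed
    qed
  qed
  have "Inv VF EF Rt \<rho> VB W' \<phi>' (insert {\<phi> u, x} R) Bl' c' yy'"
    unfolding Inv_def
  proof (intro conjI)
    show "Rt \<subseteq> W'" "W' \<subseteq> VF" using RtW WV wV by (auto simp: W'_def)
  qed (fact inj' img' roots' conn' R' rednl' blue' injyy' finBl' cardBl' cnt')+
  then show ?thesis by (simp add: W'_def \<phi>'_def Bl'_def c'_def yy'_def e2_def)
qed

lemma ind_all: assumes "rooted_forest VF EF Rt" shows "ind EF VF = EF"
  using rf_facts(3)[OF assms] by (auto simp: ind_def)

lemma inv_final: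
  assumes rf: "rooted_forest VF EF Rt" and inv: "Inv VF EF Rt \<rho> VB VF \<phi> R Bl c yy"
  shows "good_copy VF EF Rt \<rho> VB R Bl \<phi>"
proof -
  have indV: "ind EF VF = EF" using ind_all[OF rf] .
  note I = inv[unfolded Inv_def indV]
  have injW: "inj_on \<phi> VF" and imgW: "\<phi> ` VF \<subseteq> VB"
    and roots: "\<forall>r\<in>Rt. \<phi> r = \<rho> r"
    and Rdef: "R = (\<lambda>e. \<phi> ` e) ` EF"
    and rednl: "\<forall>e\<in>EF. \<exists>a\<in>e. a \<notin> leaves VF EF Rt"
    and blue: "\<forall>e\<in>Bl. {\<phi> (c e), yy e} = e \<and> c e \<in> VF \<and> c e \<notin> leaves VF EF Rt \<and> yy e \<in> VB"
    and injyy: "inj_on yy Bl" and finBl: "finite Bl"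
    and cnt: "\<forall>v\<in>VF. card {e\<in>Bl. c e = v} \<le> card {e\<in>EF. v \<in> e}"
    using I by auto
  have lV: "leaves VF EF Rt \<subseteq> VF" by (auto simp: leaves_def)
  have eV: "\<And>e. e \<in> EF \<Longrightarrow> e \<subseteq> VF" using rf_facts(3)[OF rf] by blast
  have notleaf: "\<phi> a \<in> \<phi> ` VF - \<phi> ` leaves VF EF Rt" if "a \<in> VF" "a \<notin> leaves VF EF Rt" for a
    using that injW lV inj_on_image_mem_iff[OF injW] by auto
  define Vc where "Vc = \<phi> ` VF"
  define S where "S = {e \<in> Bl. e \<inter> Vc \<noteq> {} \<and> e \<inter> (VB - Vc) \<noteq> {}}"
  have bnl: "\<forall>e\<in>R \<union> Bl. e \<inter> (\<phi> ` VF - \<phi> ` leaves VF EF Rt) \<noteq> {}"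
  proof
    fix e assume "e \<in> R \<union> Bl"
    then show "e \<inter> (\<phi> ` VF - \<phi> ` leaves VF EF Rt) \<noteq> {}"
    proof
      assume "e \<in> R"
      then obtain e0 where e0: "e0 \<in> EF" "e = \<phi> ` e0" using Rdef by auto
      then obtain a where "a \<in> e0" "a \<notin> leaves VF EF Rt" using rednl by blast
      then show ?thesis using notleaf[of a] eV[OF e0(1)] e0 by blast
    next
      assume "e \<in> Bl"
      then show ?thesis using notleaf[of "c e"] blue by blast
    qed
  qed
  have yout: "yy e \<notin> Vc" "e = {\<phi> (c e), yy e}" "c e \<in> VF" if "e \<in> S" for e
  proof -
    have eB: "e \<in> Bl" "e \<inter> (VB - Vc) \<noteq> {}" using that by (auto simp: S_def)
    then show "e = {\<phi> (c e), yy e}" "c e \<in> VF" using blue by auto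
    then show "yy e \<notin> Vc" using eB by (auto simp: Vc_def)
  qed
  have csf: "centered_star_forest S Vc (degree ((\<lambda>e. \<phi> ` e) ` EF))"
    unfolding centered_star_forest_def
  proof (intro exI[of _ "\<lambda>e. \<phi> (c e)"] conjI ballI impI)
    fix e assume "e \<in> S"
    then show "\<phi> (c e) \<in> e" "\<phi> (c e) \<in> Vc" using yout[of e] by (auto simp: Vc_def)
  next
    fix e e' assume ee: "e \<in> S" "e' \<in> S" "\<phi> (c e) \<noteq> \<phi> (c e')"
    then have "e \<noteq> e'" by auto
    moreover have "e \<in> Bl" "e' \<in> Bl" using ee by (auto simp: S_def)
    ultimately have "yy e \<noteq> yy e'" using injyy by (auto simp: inj_on_def)
    moreover have "\<phi> (c e) \<in> Vc" "\<phi> (c e') \<in> Vc" using yout ee by (auto simp: Vc_def)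
    moreover have "e \<inter> e' = {\<phi> (c e), yy e} \<inter> {\<phi> (c e'), yy e'}"
      using yout(2)[OF ee(1)] yout(2)[OF ee(2)] by simp
    ultimately show "e \<inter> e' = {}"
      using yout(1)[OF ee(1)] yout(1)[OF ee(2)] ee(3) by auto
  next
    fix z assume "z \<in> Vc"
    then obtain v where v: "v \<in> VF" "z = \<phi> v" by (auto simp: Vc_def)
    have "{e \<in> S. \<phi> (c e) = z} \<subseteq> {e\<in>Bl. c e = v}"
    proof
      fix e assume e: "e \<in> {e \<in> S. \<phi> (c e) = z}"
      then have "e \<in> Bl" "c e \<in> VF" "\<phi> (c e) = \<phi> v" using yout(3)[of e] v by (auto simp: S_def)
      then show "e \<in> {e\<in>Bl. c e = v}" using inj_on_eq_iff[OF injW] v(1) by auto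
    qed
    then have "card {e \<in> S. \<phi> (c e) = z} \<le> card {e\<in>Bl. c e = v}"
      using finBl by (intro card_mono) auto
    also have "\<dots> \<le> card {e\<in>EF. v \<in> e}" using cnt v by blast
    also have "\<dots> = degree ((\<lambda>e. \<phi> ` e) ` EF) z"
    proof -
      have mem: "\<And>e. e \<in> EF \<Longrightarrow> (\<phi> v \<in> \<phi> ` e) = (v \<in> e)"
        using inj_on_image_mem_iff[OF injW v(1)] eV by blast
      have "{e' \<in> (\<lambda>e. \<phi> ` e) ` EF. z \<in> e'} = (\<lambda>e. \<phi> ` e) ` {e\<in>EF. v \<in> e}"
      proof
        show "{e' \<in> (\<lambda>e. \<phi> ` e) ` EF. z \<in> e'} \<subseteq> (\<lambda>e. \<phi> ` e) ` {e\<in>EF. v \<in> e}"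
        proof
          fix e' assume "e' \<in> {e' \<in> (\<lambda>e. \<phi> ` e) ` EF. z \<in> e'}"
          then obtain e where e: "e \<in> EF" "e' = \<phi> ` e" "\<phi> v \<in> \<phi> ` e" using v(2) by auto
          then have "v \<in> e" using mem by blast
          then show "e' \<in> (\<lambda>e. \<phi> ` e) ` {e\<in>EF. v \<in> e}" using e by blast
        qed
        show "(\<lambda>e. \<phi> ` e) ` {e\<in>EF. v \<in> e} \<subseteq> {e' \<in> (\<lambda>e. \<phi> ` e) ` EF. z \<in> e'}"
          using v(2) by auto
      qed
      moreover have "inj_on (\<lambda>e. \<phi> ` e) {e\<in>EF. v \<in> e}"
        by (rule inj_on_subset[OF inj_on_image_Pow[OF injW]]) (use eV in auto)
      ultimately show ?thesis unfolding degree_def by (simp add: card_image)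
    qed
    finally show "card {e \<in> S. \<phi> (c e) = z} \<le> degree ((\<lambda>e. \<phi> ` e) ` EF) z" .
  qed
  show ?thesis
    unfolding good_copy_def Let_def
    using injW imgW Rdef roots bnl csf by (simp add: S_def Vc_def)
qed

lemma inv_init:
  assumes rf: "rooted_forest VF EF Rt" and "inj_on \<rho> Rt" "\<rho> ` Rt \<subseteq> VB"
  shows "Inv VF EF Rt \<rho> VB Rt \<rho> {} {} c yy"
proof -
  have ind0: "ind EF Rt = {}"
  proof (rule ccontr)
    assume "ind EF Rt \<noteq> {}"
    then obtain e where e: "e \<in> EF" "e \<subseteq> Rt" by (auto simp: ind_def)
    have "card e = 2" using rf_facts(3)[OF rf e(1)] by simp
    then obtain a b where ab: "e = {a, b}" "a \<noteq> b" by (auto simp: card_2_iff)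
    have abR: "a \<in> Rt" "b \<in> Rt" using ab(1) e(2) by auto
    have "a \<in> VF" using abR(1) rf_facts(4)[OF rf] by blast
    then have ex: "\<exists>!r. r \<in> Rt \<and> connected_in EF a r" using rf_facts(6)[OF rf] by blast
    have "{a, b} \<in> EF" using ab(1) e(1) by simp
    then have cab: "connected_in EF a b" by (rule connected_edge)
    have caa: "connected_in EF a a" by (rule connected_refl)
    have "b = a" by (rule ex1_eq[OF ex]) (use abR cab caa in simp_all)
    then show False using ab(2) by simp
  qed
  have conn0: "\<forall>v\<in>Rt. \<exists>r\<in>Rt. connected_in {} v r"
  proof (intro ballI)
    fix v assume v: "v \<in> Rt"
    show "\<exists>r\<in>Rt. connected_in {} v r" using v connected_refl[of "{}" v] by (rule bexI[rotated])
  qed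
  show ?thesis unfolding Inv_def ind0 using assms(2,3) conn0 rf_facts(4)[OF rf] by simp
qed

lemma main:
  assumes rf: "rooted_forest VF EF Rt" and finVB: "finite VB" and cardVB: "card VB \<ge> card VF + card EF"
  shows "Inv VF EF Rt \<rho> VB W \<phi> R Bl c yy \<Longrightarrow>
    wc_forces (\<lambda>R Bl. \<exists>\<phi>. good_copy VF EF Rt \<rho> VB R Bl \<phi>) (complete_edges VB) (card EF - card (ind EF W)) R Bl"
proof (induction "card VF - card W" arbitrary: W \<phi> R Bl c yy rule: less_induct)
  case less
  note inv = less.prems
  note I = inv[unfolded Inv_def]
  have RtW: "Rt \<subseteq> W" and WV: "W \<subseteq> VF" and imgW: "\<phi> ` W \<subseteq> VB"
    and Rdef: "R = (\<lambda>e. \<phi> ` e) ` ind EF W"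
    and blue: "\<forall>e\<in>Bl. {\<phi> (c e), yy e} = e \<and> c e \<in> W \<and> c e \<notin> leaves VF EF Rt \<and> yy e \<in> VB"
    and finBl: "finite Bl" and cardBl: "card Bl = card (ind EF W)"
    and conn: "\<forall>v\<in>W. \<exists>r\<in>Rt. connected_in (ind EF W) v r"
    using I by auto
  have finV: "finite VF" using rf_facts(1)[OF rf] .
  have finE: "finite EF" using rf_facts(2)[OF rf] .
  show ?case
  proof (cases "W = VF")
    case True
    then have z: "card EF - card (ind EF W) = 0" using ind_all[OF rf] by simp
    have g: "good_copy VF EF Rt \<rho> VB R Bl \<phi>" using inv_final[OF rf] inv True by simp
    show ?thesis by (simp only: z wc_forces.simps) (use g in blast)
  next
    case False
    obtain u w where uw: "{u, w} \<in> EF" "u \<in> W" "w \<notin> W"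
      using cross_edge[OF rf RtW WV False] by blast
    have wV: "w \<in> VF" using rf_facts(3)[OF rf uw(1)] by auto
    define U where "U = \<phi> ` W \<union> yy ` Bl"
    have finW: "finite W" using finV WV finite_subset by blast
    have cU: "card U \<le> card W + card Bl" unfolding U_def
      by (rule order_trans[OF card_Un_le add_mono[OF card_image_le card_image_le]]) (use finW finBl in auto)
    have c1: "card W < card VF" using WV False finV by (simp add: psubset_card_mono)
    have indE: "ind EF W \<subseteq> EF" by (auto simp: ind_def)
    have "{u, w} \<notin> ind EF W" using uw by (auto simp: ind_def)
    then have c2: "card (ind EF W) < card EF" using indE uw(1) finE
      by (metis psubsetI psubset_card_mono)
    have finU: "finite U" using finW finBl by (simp add: U_def)
    have "card VB \<le> card (VB - U) + card U"
      by (rule order_trans[OF card_mono card_Un_le]) (use finVB finU in auto)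
    then have c3: "card (VB - U) \<ge> 2" using cU c1 c2 cardBl cardVB by linarith
    have "VB - U \<noteq> {}" using c3 by (metis card.empty not_numeral_le_zero)
    then obtain x where x: "x \<in> VB - U" by blast
    have "card (VB - U - {x}) \<ge> 1" using c3 x finVB by (simp add: card_Diff_singleton)
    then have "VB - U - {x} \<noteq> {}" by (metis card.empty not_one_le_zero)
    then obtain y where y: "y \<in> VB - U - {x}" by blast
    have xU: "x \<notin> \<phi> ` W \<union> yy ` Bl" "x \<in> VB" and yU: "y \<notin> \<phi> ` W \<union> yy ` Bl" "y \<in> VB" and xy: "x \<noteq> y"
      using x y by (auto simp: U_def)
    define W' where "W' = insert w W"
    have ind': "ind EF W' = insert {u, w} (ind EF W)"
      unfolding W'_def using new_edges[OF rf WV conn uw] .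
    have cind': "card (ind EF W') = Suc (card (ind EF W))"
    proof -
      have fi: "finite (ind EF W)" using finite_subset[OF indE finE] .
      show ?thesis unfolding ind' using card_insert_disjoint[OF fi \<open>{u, w} \<notin> ind EF W\<close>] .
    qed
    have "card (ind EF W') \<le> card EF" using ind' indE uw(1) finE by (intro card_mono) auto
    then obtain m where m: "card EF - card (ind EF W) = Suc m" "m = card EF - card (ind EF W')"
      using cind' by (intro that) auto
    have meas: "card VF - card W' < card VF - card W"
      using c1 uw(3) finW by (simp add: W'_def)
    have inv1: "Inv VF EF Rt \<rho> VB W' (\<phi>(w := x)) (insert {\<phi> u, x} R) (insert {\<phi> u, y} Bl)
           (c({\<phi> u, y} := u)) (yy({\<phi> u, y} := y))"
      unfolding W'_def by (rule inv_step[OF rf inv uw xU(2) yU(2) xU(1) yU(1) xy])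
    have inv2: "Inv VF EF Rt \<rho> VB W' (\<phi>(w := y)) (insert {\<phi> u, y} R) (insert {\<phi> u, x} Bl)
           (c({\<phi> u, x} := u)) (yy({\<phi> u, x} := x))"
      unfolding W'_def by (rule inv_step[OF rf inv uw yU(2) xU(2) yU(1) xU(1) xy[symmetric]])
    have G1: "wc_forces (\<lambda>R Bl. \<exists>\<phi>. good_copy VF EF Rt \<rho> VB R Bl \<phi>) (complete_edges VB) m
               (insert {\<phi> u, x} R) (insert {\<phi> u, y} Bl)"
      using less.hyps[OF meas inv1] m(2) by simp
    have G2: "wc_forces (\<lambda>R Bl. \<exists>\<phi>. good_copy VF EF Rt \<rho> VB R Bl \<phi>) (complete_edges VB) m
               (insert {\<phi> u, y} R) (insert {\<phi> u, x} Bl)"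
      using less.hyps[OF meas inv2] m(2) by simp
    have phiu: "\<phi> u \<in> VB" "\<phi> u \<noteq> x" "\<phi> u \<noteq> y" using imgW uw(2) xU yU by auto
    have free: "{\<phi> u, z} \<in> complete_edges VB - (R \<union> Bl)" if "z \<in> VB" "z \<notin> \<phi> ` W \<union> yy ` Bl" "\<phi> u \<noteq> z" for z
    proof -
      have "{\<phi> u, z} \<in> complete_edges VB" using that phiu by (simp add: complete_edges_def)
      moreover have "{\<phi> u, z} \<notin> R"
      proof
        assume "{\<phi> u, z} \<in> R"
        then obtain e0 where e0: "e0 \<in> ind EF W" "{\<phi> u, z} = \<phi> ` e0" using Rdef by auto
        have "z \<in> \<phi> ` e0" using e0(2) by (metis insertCI)
        moreover have "e0 \<subseteq> W" using e0(1) by (simp add: ind_def)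
        ultimately have "z \<in> \<phi> ` W" by blast
        then show False using that by auto
      qed
      moreover have "{\<phi> u, z} \<notin> Bl"
      proof
        assume B: "{\<phi> u, z} \<in> Bl"
        then have "{\<phi> u, z} = {\<phi> (c {\<phi> u, z}), yy {\<phi> u, z}}" "c {\<phi> u, z} \<in> W" using blue by auto
        then have "z \<in> \<phi> ` W \<or> z = yy {\<phi> u, z}" by (auto simp: doubleton_eq_iff)
        then show False using that B by auto
      qed
      ultimately show ?thesis by blast
    qed
    have "{\<phi> u, x} \<noteq> {\<phi> u, y}" using phiu xy by (auto simp: doubleton_eq_iff)
    note F1 = free[OF xU(2) xU(1) phiu(2)] and F2 = free[OF yU(2) yU(1) phiu(3)]
    show ?thesis unfolding m(1) wc_forces.simps
      apply (rule disjI2)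
      apply (rule exI[of _ "{\<phi> u, x}"])
      apply (rule exI[of _ "{\<phi> u, y}"])
      apply (intro conjI)
          apply (rule F1)
         apply (rule F2)
        apply (rule \<open>{\<phi> u, x} \<noteq> {\<phi> u, y}\<close>)
       apply (rule G1)
      apply (rule G2)
      done
  qed
qed

theorem lemma3p20:
  fixes VF :: "'a set" and EF :: "'a set set" and Rt :: "'a set"
    and VB :: "'b set" and \<rho> :: "'a \<Rightarrow> 'b"
  assumes "rooted_forest VF EF Rt"
    and "finite VB"
    and "card VB \<ge> card VF + card EF"
    and "inj_on \<rho> Rt" and "\<rho> ` Rt \<subseteq> VB"
  shows "wc_forces (\<lambda>R Bl. \<exists>\<phi>. good_copy VF EF Rt \<rho> VB R Bl \<phi>)
           (complete_edges VB) (card EF) {} {}"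
proof -
  have inv: "Inv VF EF Rt \<rho> VB Rt \<rho> {} {} (\<lambda>_. undefined) (\<lambda>_. undefined)"
    using inv_init[OF assms(1) assms(4) assms(5)] .
  have "ind EF Rt = {}" using inv by (simp add: Inv_def)
  then show ?thesis using main[OF assms(1) assms(2) assms(3) inv] by simp
qed

end
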